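(* Let $f:\mathbb{R}^{M}\times\Theta\to\mathbb{R}^N$ (with $N\ge1$) be a network built from $L$ linear layers as follows: $\mathbf{x}^1=\mathbf{x}$, $\mathbf{x}^{l+1}=\sigma_l(\mathbf{W}_l\mathbf{x}^l;\boldsymbol{\beta}_l)$ for $l=1,\dots,L-1$, and $f(\mathbf{x};\boldsymbol{\theta})=\sigma_L(\mathbf{W}_L\mathbf{x}^L;\boldsymbol{\beta}_L)$, where $\mathbf{W}_l$ are weight matrices, $\sigma_l$ are differentiable maps possibly with extra parameters $\boldsymbol{\beta}_l$, and $\boldsymbol{\theta}=(\mathbf{W}_1,\boldsymbol{\beta}_1,\dots,\mathbf{W}_L,\boldsymbol{\beta}_L)$; $f$ is assumed twice differentiable in $\boldsymbol{\theta}$. For each $l$ let $f^l$ denote the map from the input $\mathbf{x}^l$ of the $l$-th linear layer to the network output (with parameters fixed). Let $(\mathbf{x}_i,\mathbf{y}_i)_{i=1}^n$ be training data, let $\mathbf{x}_i^l$ be the input to the $l$-th linear layer when the network input is $\mathbf{x}_i$, and assume all $\mathbf{x}_i^l\ne0$. Let $\boldsymbol{\theta}^*$ be an exact interpolation solution ($f(\mathbf{x}_i;\boldsymbol{\theta}^* )=\mathbf{y}_i$ for all $i$). Then $$\sum_{l=1}^L dV_{f^l}\le \frac{N^{-N/2}}{n}\sum_{l=1}^L\sum_{i=1}^n\|J_{f^l}(\mathbf{x}_i^l)\|_F^N\le \frac1n\sqrt{\sum_{l=1}^L\sum_{i=1}^n\frac{\|\mathbf{W}_l\|_2^{2N}}{\|\mathbf{x}_i^l\|_2^{2N}}}\cdot\left(\frac{n\,S(\boldsymbol{\theta}^*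 )}{N}\right)^{N/2}.$$
   Context: The loss is $L(\boldsymbol{\theta})=\frac1n\sum_{i=1}^n\frac12\|f(\mathbf{x}_i;\boldsymbol{\theta})-\mathbf{y}_i\|_2^2$ and the sharpness is $S(\boldsymbol{\theta})=\operatorname{Tr}(\nabla^2_{\boldsymbol{\theta}}L(\boldsymbol{\theta}))$. $J_{f^l}(\mathbf{x}^l)$ is the Jacobian ($N$ rows) of $f^l$ at $\mathbf{x}^l$ with parameters $\boldsymbol{\theta}^*$. The local volumetric ratio of $f^l$ at $\mathbf{x}^l$ is $\sqrt{\det(J_{f^l}(\mathbf{x}^l)J_{f^l}(\mathbf{x}^l)^T)}$, and $dV_{f^l}=\frac1n\sum_{i=1}^n\sqrt{\det(J_{f^l}(\mathbf{x}_i^l)J_{f^l}(\mathbf{x}_i^l)^T)}$; the sum $\sum_l dV_{f^l}$ is the Network Volumetric Ratio. $\|\cdot\|_2$ is the Euclidean/spectral norm and $\|\cdot\|_F$ the Frobenius norm. *)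

theory Defs
  imports "HOL-Analysis.Derivative" "Jordan_Normal_Form.Determinant"
begin

text \<open>A vector of R^a is a function nat => real of which only the
coordinates j < a are relevant; a real (k x a)-matrix is a function
nat => nat => real of which only entries (i,j) with i < k, j < a are relevant.
More generally we use vectors indexed by an arbitrary finite index set I.\<close>

text \<open>The parameter vector theta = (W_1, beta_1, ..., W_L, beta_L) is one vector
indexed by the parameter names: Wp l i j is entry (i,j) of W_l, Bp l k is the
k-th entry of beta_l.\<close>

datatype param = Wp nat nat nat | Bp nat nat

definition params :: "nat \<Rightarrow> (nat \<Rightarrow> nat) \<Rightarrow> (nat \<Rightarrow> nat) \<Rightarrow> (nat \<Rightarrow> nat) \<Rightarrow> param set" where
  "params L m d q =
     {Wp l i j | l i j. l \<in> {1..L} \<and> i < m l \<and> j < d l} \<union> {Bp l k | l k. l \<in> {1..L} \<and> k < q l}"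

definition Wof :: "(param \<Rightarrow> real) \<Rightarrow> nat \<Rightarrow> nat \<Rightarrow> nat \<Rightarrow> real" where
  "Wof \<theta> l = (\<lambda>i j. \<theta> (Wp l i j))"

definition bof :: "(param \<Rightarrow> real) \<Rightarrow> nat \<Rightarrow> nat \<Rightarrow> real" where
  "bof \<theta> l = (\<lambda>k. \<theta> (Bp l k))"

definition vnorm :: "'i set \<Rightarrow> ('i \<Rightarrow> real) \<Rightarrow> real" where
  "vnorm I x = sqrt (\<Sum>j\<in>I. (x j)^2)"

definition fro :: "'k set \<Rightarrow> 'i set \<Rightarrow> ('k \<Rightarrow> 'i \<Rightarrow> real) \<Rightarrow> real" where
  "fro K I A = sqrt (\<Sum>k\<in>K. \<Sum>j\<in>I. (A k j)^2)"

definition matvec :: "nat \<Rightarrow> nat \<Rightarrow> (nat \<Rightarrow> nat \<Rightarrow> real) \<Rightarrow> (nat \<Rightarrow> real) \<Rightarrow> (nat \<Rightarrow> real)" where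
  "matvec k a A z = (\<lambda>i. if i < k then (\<Sum>j<a. A i j * z j) else 0)"

definition opnorm :: "nat \<Rightarrow> nat \<Rightarrow> (nat \<Rightarrow> nat \<Rightarrow> real) \<Rightarrow> real" where
  "opnorm k a A = Sup ((\<lambda>v. vnorm {..<k} (matvec k a A v)) ` {v. (\<forall>j. a \<le> j \<longrightarrow> v j = 0) \<and> vnorm {..<a} v \<le> 1})"

definition has_fderiv :: "'i set \<Rightarrow> 'k set \<Rightarrow> (('i \<Rightarrow> real) \<Rightarrow> ('k \<Rightarrow> real)) \<Rightarrow> ('i \<Rightarrow> real) \<Rightarrow> ('k \<Rightarrow> 'i \<Rightarrow> real) \<Rightarrow> bool" where
  "has_fderiv I K F x A \<longleftrightarrow>
     (\<forall>\<epsilon>>0. \<exists>\<delta>>0. \<forall>h. (\<forall>j. j \<notin> I \<longrightarrow> h j = 0) \<longrightarrow> vnorm I h < \<delta> \<longrightarrow>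
        vnorm K (\<lambda>k. F (\<lambda>j. x j + h j) k - F x k - (\<Sum>j\<in>I. A k j * h j)) \<le> \<epsilon> * vnorm I h)"

definition twice_fdiff :: "'i set \<Rightarrow> 'k set \<Rightarrow> (('i \<Rightarrow> real) \<Rightarrow> ('k \<Rightarrow> real)) \<Rightarrow> bool" where
  "twice_fdiff I K F \<longleftrightarrow>
     (\<exists>D. (\<forall>x. has_fderiv I K F x (D x)) \<and>
          (\<forall>x. \<exists>H. has_fderiv I (K \<times> I) (\<lambda>y (k, i). D y k i) x H))"

definition jac :: "(('i \<Rightarrow> real) \<Rightarrow> ('k \<Rightarrow> real)) \<Rightarrow> ('i \<Rightarrow> real) \<Rightarrow> 'k \<Rightarrow> 'i \<Rightarrow> real" where
  "jac F z k j = deriv (\<lambda>t. F (z(j := z j + t)) k) 0"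

text \<open>run sigma m d theta l k z: apply the k layers l, l+1, ..., l+k-1 to z, where layer l
is z |-> sigma_l (W_l z; beta_l), W_l an (m_l x d_l)-matrix.\<close>
fun run :: "(nat \<Rightarrow> (nat \<Rightarrow> real) \<Rightarrow> (nat \<Rightarrow> real) \<Rightarrow> (nat \<Rightarrow> real)) \<Rightarrow> (nat \<Rightarrow> nat) \<Rightarrow> (nat \<Rightarrow> nat)
            \<Rightarrow> (param \<Rightarrow> real) \<Rightarrow> nat \<Rightarrow> nat \<Rightarrow> (nat \<Rightarrow> real) \<Rightarrow> (nat \<Rightarrow> real)" where
  "run \<sigma> m d \<theta> l 0 z = z"
| "run \<sigma> m d \<theta> l (Suc k) z =
     run \<sigma> m d \<theta> (Suc l) k (\<sigma> l (matvec (m l) (d l) (Wof \<theta> l) z) (bof \<theta> l))"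

text \<open>The network output f(x; theta), the input x^l of the l-th linear layer,
and the map f^l from x^l to the output.\<close>
definition net where "net \<sigma> m d L \<theta> x = run \<sigma> m d \<theta> 1 L x"
definition layer_in where "layer_in \<sigma> m d \<theta> l x = run \<sigma> m d \<theta> 1 (l - 1) x"
definition f_from where "f_from \<sigma> m d L \<theta> l z = run \<sigma> m d \<theta> l (Suc L - l) z"

text \<open>Training loss and sharpness (trace of the Hessian = sum of the diagonal
second partial derivatives over all parameters).\<close>
definition loss where
  "loss \<sigma> m d L N n xs ys \<theta> =
     (1 / real n) * (\<Sum>i=1..n. (1/2) * (vnorm {..<N} (\<lambda>k. net \<sigma> m d L \<theta> (xs i) k - ys i k))^2)"

definition sharpness where
  "sharpness \<sigma> m d q L N n xs ys \<theta> =
     (\<Sum>p\<in>params L m d q. deriv (deriv (\<lambda>t. loss \<sigma> m d L N n xs ys (\<theta>(p := \<theta> p + t)))) 0)"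

definition volratio :: "nat \<Rightarrow> nat \<Rightarrow> (nat \<Rightarrow> nat \<Rightarrow> real) \<Rightarrow> real" where
  "volratio N a J = sqrt (Determinant.det (Matrix.mat N N (\<lambda>(r, s). \<Sum>j<a. J r j * J s j)))"

definition dV where
  "dV \<sigma> m d L N n xs \<theta> l =
     (1 / real n) * (\<Sum>i=1..n. volratio N (d l)
        (jac (f_from \<sigma> m d L \<theta> l) (layer_in \<sigma> m d \<theta> l (xs i))))"

end

theory Submission
  imports Defs "HOL-Analysis.Convex"
begin

lemma gram_eq:
  fixes u :: "nat \<Rightarrow> nat \<Rightarrow> real"
  shows "Matrix.mat n a (\<lambda>(r,j). u r j) * transpose_mat (Matrix.mat n a (\<lambda>(r,j). u r j))
         = Matrix.mat n n (\<lambda>(r,s). \<Sum>j<a. u r j * u s j)"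
  by (rule eq_matI) (auto simp: scalar_prod_def atLeast0LessThan)

lemma proj_le:
  fixes x y :: "nat \<Rightarrow> real"
  assumes "p = (\<Sum>j<a. y j * y j)" "p > 0"
  shows "(\<Sum>j<a. (x j - (\<Sum>j<a. x j * y j)/p * y j) * (x j - (\<Sum>j<a. x j * y j)/p * y j))
          \<le> (\<Sum>j<a. x j * x j)"
proof -
  define b where "b = (\<Sum>j<a. x j * y j)"
  define c where "c = b / p"
  have e: "\<And>j. (x j - c * y j) * (x j - c * y j) = x j * x j - 2*c*(x j*y j) + c^2*(y j*y j)"
    by (simp add: algebra_simps power2_eq_square)
  have "(\<Sum>j<a. (x j - c * y j) * (x j - c * y j)) = (\<Sum>j<a. x j * x j) - 2*c*b + c^2*p"
    unfolding e by (simp add: sum.distrib sum_subtractf sum_distrib_left b_def assms(1))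
  also have "\<dots> = (\<Sum>j<a. x j * x j) - b^2/p"
    using assms(2) by (simp add: c_def power2_eq_square field_simps)
  also have "\<dots> \<le> (\<Sum>j<a. x j * x j)" using assms(2) by simp
  finally show ?thesis by (simp add: b_def c_def)
qed

lemma hadamard:
  fixes v :: "nat \<Rightarrow> nat \<Rightarrow> real"
  shows "Determinant.det (Matrix.mat N N (\<lambda>(r,s). \<Sum>j<a. v r j * v s j)) \<le> (\<Prod>r<N. \<Sum>j<a. v r j * v r j)"
proof (induction N arbitrary: v)
  case 0
  show ?case by (simp add: det_dim_zero)
next
  case (Suc N)
  define p where "p = (\<Sum>j<a. v 0 j * v 0 j)"
  define G where "G = Matrix.mat (Suc N) (Suc N) (\<lambda>(r,s). \<Sum>j<a. v r j * v s j)"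
  have Gc: "G \<in> carrier_mat (Suc N) (Suc N)" by (simp add: G_def)
  have p0: "p \<ge> 0" unfolding p_def by (intro sum_nonneg) auto
  have prodnn: "0 \<le> (\<Prod>r<Suc N. \<Sum>j<a. v r j * v r j)"
    by (intro prod_nonneg sum_nonneg) auto
  show ?case
  proof (cases "p = 0")
    case True
    then have z: "\<forall>j<a. v 0 j = 0"
      unfolding p_def by (subst (asm) sum_nonneg_eq_0_iff) auto
    have "G = mat\<^sub>r (Suc N) (Suc N) (\<lambda>i. if i = 0 then 0\<^sub>v (Suc N) else row G i)"
      by (rule eq_matI) (auto simp: G_def z)
    then have "Determinant.det G = 0"
      using det_row_0[of 0 "Suc N" "\<lambda>i. row G i"] Gc by auto
    then show ?thesis using prodnn by (simp add: G_def)
  next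
    case False
    then have pp: "p > 0" using p0 by simp
    define e where "e r = (if r = 0 then 0 else (\<Sum>j<a. v r j * v 0 j) / p)" for r
    define w where "w r j = v r j - e r * v 0 j" for r j
    define V where "V = Matrix.mat (Suc N) a (\<lambda>(r,j). v r j)"
    define E where "E = Matrix.mat (Suc N) (Suc N) (\<lambda>(r,s). if r = s then 1 else if s = 0 then - e r else 0)"
    have Ec: "E \<in> carrier_mat (Suc N) (Suc N)" by (simp add: E_def)
    have Vc: "V \<in> carrier_mat (Suc N) a" by (simp add: V_def)
    have GV: "G = V * transpose_mat V" unfolding G_def V_def by (simp add: gram_eq)
    have tm: "E $$ (r,k) * v k j = (if k = r then v k j else 0) + (if k = 0 then - e r * v 0 j else 0)"
      if "r < Suc N" "k < Suc N" for r k j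
      using that by (auto simp: E_def e_def)
    have EV: "E * V = Matrix.mat (Suc N) a (\<lambda>(r,j). w r j)"
    proof (rule eq_matI)
      fix r j assume rj: "r < dim_row (Matrix.mat (Suc N) a (\<lambda>(r,j). w r j))"
         "j < dim_col (Matrix.mat (Suc N) a (\<lambda>(r,j). w r j))"
      then have r: "r < Suc N" and j: "j < a" by auto
      have "(E * V) $$ (r,j) = (\<Sum>k\<in>{0..<Suc N}. E $$ (r,k) * v k j)"
        using r j Ec Vc by (auto simp: scalar_prod_def V_def)
      also have "\<dots> = (\<Sum>k\<in>{0..<Suc N}. (if k = r then v k j else 0) + (if k = 0 then - e r * v 0 j else 0))"
        by (rule sum.cong) (auto simp: tm r)
      also have "\<dots> = v r j - e r * v 0 j"
        using r by (simp add: sum.distrib)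
      finally show "(E * V) $$ (r,j) = Matrix.mat (Suc N) a (\<lambda>(r,j). w r j) $$ (r,j)"
        using r j by (simp add: w_def)
    qed (use Ec Vc in auto)
    define G' where "G' = Matrix.mat (Suc N) (Suc N) (\<lambda>(r,s). \<Sum>j<a. w r j * w s j)"
    have "G' = (E * V) * transpose_mat (E * V)" unfolding EV G'_def by (simp add: gram_eq)
    also have "\<dots> = E * G * transpose_mat E"
      unfolding GV using Ec Vc
      by (simp add: transpose_mult[of E "Suc N" "Suc N" V a] assoc_mult_mat[of _ "Suc N" "Suc N" _ a _ "Suc N"]
            assoc_mult_mat[of _ "Suc N" "Suc N" _ "Suc N" _ "Suc N"])
    finally have G'E: "G' = E * G * transpose_mat E" .
    have dg: "diag_mat E = replicate (Suc N) 1"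
      by (rule nth_equalityI) (auto simp: diag_mat_def E_def nth_Cons' simp del: upt_Suc replicate_Suc)
    have detE: "Determinant.det E = 1"
    proof -
      have "Determinant.det E = prod_list (diag_mat E)"
        by (rule det_lower_triangular[of "Suc N"]) (auto simp: E_def)
      then show ?thesis by (simp add: dg)
    qed
    have "Determinant.det G' = Determinant.det E * Determinant.det G * Determinant.det (transpose_mat E)"
      unfolding G'E using Ec Gc
      by (simp add: det_mult[of _ "Suc N"])
    then have detG: "Determinant.det G = Determinant.det G'"
      using detE det_transpose[OF Ec] by simp
    have w0: "w 0 = v 0" by (auto simp: w_def e_def)
    have orth: "(\<Sum>j<a. v 0 j * w (Suc s) j) = 0" for s
    proof -
      have "(\<Sum>j<a. v 0 j * w (Suc s) j) = (\<Sum>j<a. v (Suc s) j * v 0 j) - e (Suc s) * p"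
        by (simp add: w0 w_def p_def algebra_simps sum_subtractf sum_distrib_left)
      also have "\<dots> = 0" using pp by (simp add: e_def)
      finally show ?thesis .
    qed
    have orth': "(\<Sum>j<a. w (Suc s) j * v 0 j) = 0" for s
      using orth[of s] by (simp add: mult.commute)
    define A4 where "A4 = Matrix.mat N N (\<lambda>(r,s). \<Sum>j<a. w (Suc r) j * w (Suc s) j)"
    have G'blk: "G' = four_block_mat (Matrix.mat 1 1 (\<lambda>_. p)) (0\<^sub>m 1 N) (0\<^sub>m N 1) A4"
      by (rule eq_matI) (auto simp: G'_def A4_def four_block_mat_def w0 p_def orth orth' less_Suc_eq_0_disj)
    have "Determinant.det G' = p * Determinant.det A4"
      unfolding G'blk
      by (subst det_four_block_mat_lower_left_zero_col) (auto simp: A4_def det_single)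
    also have "\<dots> \<le> p * (\<Prod>r<N. \<Sum>j<a. w (Suc r) j * w (Suc r) j)"
      using Suc.IH[of "\<lambda>r. w (Suc r)"] p0 unfolding A4_def by (simp add: mult_left_mono)
    also have "\<dots> \<le> p * (\<Prod>r<N. \<Sum>j<a. v (Suc r) j * v (Suc r) j)"
    proof (intro mult_left_mono prod_mono conjI p0)
      fix r assume "r \<in> {..<N}"
      show "0 \<le> (\<Sum>j<a. w (Suc r) j * w (Suc r) j)" by (intro sum_nonneg) auto
      show "(\<Sum>j<a. w (Suc r) j * w (Suc r) j) \<le> (\<Sum>j<a. v (Suc r) j * v (Suc r) j)"
        using proj_le[where p=p and a=a and y="v 0" and x="v (Suc r)", OF p_def pp] by (simp add: w_def e_def)
    qed
    also have "\<dots> = (\<Prod>r<Suc N. \<Sum>j<a. v r j * v r j)"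
      by (simp only: prod.lessThan_Suc_shift p_def)
    finally show ?thesis using detG by (simp add: G_def)
  qed
qed

lemma amgm_pow:
  fixes y :: "nat \<Rightarrow> real"
  assumes "N \<ge> 1" "\<And>r. r < N \<Longrightarrow> y r \<ge> 0"
  shows "(\<Prod>r<N. y r) \<le> ((\<Sum>r<N. y r) / N) ^ N"
proof -
  define P where "P = (\<Prod>r<N. y r)"
  have P0: "P \<ge> 0" unfolding P_def using assms(2) by (intro prod_nonneg) auto
  have am: "P powr (1 / real N) \<le> (\<Sum>r<N. y r / real N)"
  proof -
    have "{..<N} \<noteq> {}" using assms(1) by (metis lessThan_empty_iff not_one_le_zero)
    then show ?thesis unfolding P_def using arith_geom_mean[of "{..<N}" y] assms by auto
  qed
  have "P = (P powr (1 / real N)) ^ N"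
  proof (cases "P = 0")
    case True then show ?thesis using assms(1) by simp
  next
    case False
    then have "P > 0" using P0 by simp
    then have "(P powr (1 / real N)) ^ N = P powr (1 / real N * real N)"
      by (simp add: powr_realpow[symmetric] powr_powr)
    also have "\<dots> = P" using assms(1) \<open>P > 0\<close> by simp
    finally show ?thesis by simp
  qed
  also have "\<dots> \<le> (\<Sum>r<N. y r / real N) ^ N"
    by (intro power_mono am) simp
  also have "\<dots> = ((\<Sum>r<N. y r) / N) ^ N" by (simp add: sum_divide_distrib)
  finally show ?thesis unfolding P_def .
qed

lemma vol_bound:
  assumes N: "N \<ge> 1"
  shows "volratio N a J \<le> real N powr (- real N / 2) * fro {..<N} {..<a} J ^ N"
proof -
  define y where "y r = (\<Sum>j<a. J r j * J r j)" for r
  have y0: "y r \<ge> 0" for r unfolding y_def by (intro sum_nonneg) auto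
  define Sy where "Sy = (\<Sum>r<N. y r)"
  have Sy0: "Sy \<ge> 0" unfolding Sy_def using y0 by (intro sum_nonneg) auto
  have fro: "fro {..<N} {..<a} J = sqrt Sy"
    by (simp add: fro_def Sy_def y_def power2_eq_square)
  have "volratio N a J \<le> sqrt ((Sy / N) ^ N)"
    unfolding volratio_def
  proof (rule real_sqrt_le_mono)
    have "Determinant.det (Matrix.mat N N (\<lambda>(r,s). \<Sum>j<a. J r j * J s j)) \<le> (\<Prod>r<N. y r)"
      unfolding y_def by (rule hadamard)
    also have "\<dots> \<le> (Sy / N) ^ N" unfolding Sy_def by (rule amgm_pow[OF N]) (rule y0)
    finally show "Determinant.det (Matrix.mat N N (\<lambda>(r,s). \<Sum>j<a. J r j * J s j)) \<le> (Sy / N) ^ N" .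
  qed
  also have "\<dots> = sqrt Sy ^ N / sqrt (real N ^ N)"
    by (simp only: power_divide real_sqrt_divide real_sqrt_power)
  also have "sqrt (real N ^ N) = real N powr (real N / 2)"
  proof -
    have "real N powr (real N / 2) = sqrt (real N powr real N)" by (rule powr_half_sqrt_powr) simp
    also have "real N powr real N = real N ^ N" using N by (intro powr_realpow) simp
    finally show ?thesis by simp
  qed
  also have "sqrt Sy ^ N / real N powr (real N / 2) = real N powr (- real N / 2) * fro {..<N} {..<a} J ^ N"
  proof -
    have "real N powr (- real N / 2) = real N powr (- (real N / 2))" by simp
    also have "\<dots> = inverse (real N powr (real N / 2))" by (rule powr_minus)
    finally have "real N powr (- real N / 2) = inverse (real N powr (real N / 2))" .
    then show ?thesis unfolding fro by (simp only: divide_inverse mult.commute)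
  qed
  finally show ?thesis .
qed

lemma vnorm_nonneg: "vnorm I g \<ge> 0"
  unfolding vnorm_def by (intro real_sqrt_ge_zero sum_nonneg) auto

lemma vnorm_comp_le:
  assumes "finite K" "k \<in> K"
  shows "\<bar>g k\<bar> \<le> vnorm K g"
proof -
  have "\<bar>g k\<bar> = sqrt ((g k)^2)" by simp
  also have "\<dots> \<le> vnorm K g" unfolding vnorm_def
    by (intro real_sqrt_le_mono member_le_sum assms) auto
  finally show ?thesis .
qed

lemma vnorm_scale: "vnorm I (\<lambda>j. t * h j) = \<bar>t\<bar> * vnorm I h"
proof -
  have "vnorm I (\<lambda>j. t * h j) = sqrt (t^2 * (\<Sum>j\<in>I. (h j)^2))"
    unfolding vnorm_def by (simp add: power_mult_distrib sum_distrib_left)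
  also have "\<dots> = \<bar>t\<bar> * vnorm I h" unfolding vnorm_def by (simp add: real_sqrt_mult)
  finally show ?thesis .
qed

lemma line_deriv0:
  assumes fd: "has_fderiv I K F x A" and fin: "finite K" "k \<in> K"
    and supp: "\<forall>j. j \<notin> I \<longrightarrow> \<Delta> j = 0"
  shows "((\<lambda>t. F (\<lambda>j. x j + t * \<Delta> j) k) has_real_derivative (\<Sum>j\<in>I. A k j * \<Delta> j)) (at 0)"
proof -
  define nD where "nD = vnorm I \<Delta>"
  have nD0: "nD \<ge> 0" unfolding nD_def by (rule vnorm_nonneg)
  define D where "D = (\<Sum>j\<in>I. A k j * \<Delta> j)"
  have "((\<lambda>t. (F (\<lambda>j. x j + t * \<Delta> j) k - F x k) / t) \<midarrow>0\<rightarrow> D)"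
  proof (rule LIM_I)
    fix r :: real assume r: "0 < r"
    define \<epsilon> where "\<epsilon> = r / (2 * (nD + 1))"
    have \<epsilon>: "\<epsilon> > 0" unfolding \<epsilon>_def using r nD0 by simp
    obtain \<delta> where \<delta>: "\<delta> > 0" and H: "\<And>h. (\<forall>j. j \<notin> I \<longrightarrow> h j = 0) \<Longrightarrow> vnorm I h < \<delta> \<Longrightarrow>
        vnorm K (\<lambda>k. F (\<lambda>j. x j + h j) k - F x k - (\<Sum>j\<in>I. A k j * h j)) \<le> \<epsilon> * vnorm I h"
      using fd \<epsilon> unfolding has_fderiv_def by meson
    define s where "s = \<delta> / (nD + 1)"
    have s: "s > 0" unfolding s_def using \<delta> nD0 by simp
    show "\<exists>s>0. \<forall>t. t \<noteq> 0 \<and> norm (t - 0) < s \<longrightarrow>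
            norm ((F (\<lambda>j. x j + t * \<Delta> j) k - F x k) / t - D) < r"
    proof (intro exI[of _ s] conjI allI impI s)
      fix t :: real assume t: "t \<noteq> 0 \<and> norm (t - 0) < s"
      then have tne: "t \<noteq> 0" and ts: "\<bar>t\<bar> < s" by auto
      have vh: "vnorm I (\<lambda>j. t * \<Delta> j) = \<bar>t\<bar> * nD" unfolding nD_def by (rule vnorm_scale)
      have "\<bar>t\<bar> * nD \<le> \<bar>t\<bar> * (nD + 1)" by (simp add: mult_left_mono)
      also have "\<dots> < s * (nD + 1)" using ts nD0 by (intro mult_strict_right_mono) auto
      also have "\<dots> = \<delta>" unfolding s_def using nD0 by simp
      finally have lt: "vnorm I (\<lambda>j. t * \<Delta> j) < \<delta>" using vh by simp
      have sp: "\<forall>j. j \<notin> I \<longrightarrow> t * \<Delta> j = 0" using supp by simp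
      have "\<bar>F (\<lambda>j. x j + t * \<Delta> j) k - F x k - (\<Sum>j\<in>I. A k j * (t * \<Delta> j))\<bar>
            \<le> vnorm K (\<lambda>k. F (\<lambda>j. x j + t * \<Delta> j) k - F x k - (\<Sum>j\<in>I. A k j * (t * \<Delta> j)))"
        by (rule vnorm_comp_le[OF fin, where g="\<lambda>k. F (\<lambda>j. x j + t * \<Delta> j) k - F x k - (\<Sum>j\<in>I. A k j * (t * \<Delta> j))"])
      also have "\<dots> \<le> \<epsilon> * (\<bar>t\<bar> * nD)" using H[OF sp lt] vh by simp
      finally have b1: "\<bar>F (\<lambda>j. x j + t * \<Delta> j) k - F x k - t * D\<bar> \<le> \<epsilon> * (\<bar>t\<bar> * nD)"
        by (simp add: D_def sum_distrib_left algebra_simps)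
      have "(F (\<lambda>j. x j + t * \<Delta> j) k - F x k) / t - D = (F (\<lambda>j. x j + t * \<Delta> j) k - F x k - t * D) / t"
        using tne by (simp add: field_simps)
      then have "norm ((F (\<lambda>j. x j + t * \<Delta> j) k - F x k) / t - D)
                 = \<bar>F (\<lambda>j. x j + t * \<Delta> j) k - F x k - t * D\<bar> / \<bar>t\<bar>" by simp
      also have "\<dots> \<le> \<epsilon> * (\<bar>t\<bar> * nD) / \<bar>t\<bar>" using b1 tne by (intro divide_right_mono) auto
      also have "\<dots> = \<epsilon> * nD" using tne by simp
      also have "\<dots> < r" unfolding \<epsilon>_def using r nD0 by (simp add: field_simps add_nonneg_pos)
      finally show "norm ((F (\<lambda>j. x j + t * \<Delta> j) k - F x k) / t - D) < r" .
    qed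
  qed
  then show ?thesis unfolding D_def has_field_derivative_iff by simp
qed

lemma line_deriv:
  assumes fd: "has_fderiv I K F (\<lambda>j. x j + t0 * \<Delta> j) A" and fin: "finite K" "k \<in> K"
    and supp: "\<forall>j. j \<notin> I \<longrightarrow> \<Delta> j = 0"
  shows "((\<lambda>t. F (\<lambda>j. x j + t * \<Delta> j) k) has_real_derivative (\<Sum>j\<in>I. A k j * \<Delta> j)) (at t0)"
proof -
  have "((\<lambda>s. F (\<lambda>j. (x j + t0 * \<Delta> j) + s * \<Delta> j) k) has_real_derivative (\<Sum>j\<in>I. A k j * \<Delta> j)) (at 0)"
    using line_deriv0[OF fd fin supp] by simp
  moreover have "(\<lambda>s. F (\<lambda>j. (x j + t0 * \<Delta> j) + s * \<Delta> j) k) = (\<lambda>s. F (\<lambda>j. x j + (s + t0) * \<Delta> j) k)"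
    by (simp add: algebra_simps)
  ultimately show ?thesis using DERIV_shift[of "\<lambda>t. F (\<lambda>j. x j + t * \<Delta> j) k" _ 0 t0] by simp
qed

lemma run_add: "run \<sigma> m d \<theta> l (a + b) z = run \<sigma> m d \<theta> (l + a) b (run \<sigma> m d \<theta> l a z)"
  by (induction a arbitrary: l z) auto

lemma run_cong:
  "(\<forall>l'. l \<le> l' \<and> l' < l + k \<longrightarrow> Wof \<theta> l' = Wof \<theta>' l' \<and> bof \<theta> l' = bof \<theta>' l')
   \<Longrightarrow> run \<sigma> m d \<theta> l k z = run \<sigma> m d \<theta>' l k z"
proof (induction k arbitrary: l z)
  case 0 then show ?case by simp
next
  case (Suc k)
  have h: "Wof \<theta> l = Wof \<theta>' l \<and> bof \<theta> l = bof \<theta>' l" using Suc.prems by auto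
  have "run \<sigma> m d \<theta> (Suc l) k z' = run \<sigma> m d \<theta>' (Suc l) k z'" for z'
    using Suc.prems by (intro Suc.IH) auto
  then show ?case using h by simp
qed

lemma params_Sigma:
  "{Wp l i j | l i j. l \<in> {1..L} \<and> i < m l \<and> j < d l}
     = (\<lambda>(l,i,j). Wp l i j) ` (SIGMA l:{1..L}. {..<m l} \<times> {..<d l})"
  by force

lemma params_Bp:
  "{Bp l k | l k. l \<in> {1..L} \<and> k < q l} = (\<lambda>(l,k). Bp l k) ` (SIGMA l:{1..L}. {..<q l})"
  by force

lemma finite_params: "finite (params L m d q)"
  unfolding params_def params_Sigma params_Bp by auto

lemma Wp_in_params: "l \<in> {1..L} \<Longrightarrow> i < m l \<Longrightarrow> j < d l \<Longrightarrow> Wp l i j \<in> params L m d q"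
  unfolding params_def by blast

definition dirW :: "nat \<Rightarrow> nat \<Rightarrow> nat \<Rightarrow> (nat \<Rightarrow> nat \<Rightarrow> real) \<Rightarrow> param \<Rightarrow> real" where
  "dirW l ml dl c p = (case p of Wp l' k a \<Rightarrow> if l' = l \<and> k < ml \<and> a < dl then c k a else 0 | Bp _ _ \<Rightarrow> 0)"

lemma dirW_supp:
  assumes "l \<in> {1..L}"
  shows "\<forall>p. p \<notin> params L m d q \<longrightarrow> dirW l (m l) (d l) c p = 0"
  using assms unfolding dirW_def by (auto split: param.splits simp: Wp_in_params)

lemma sum_dirW:
  assumes l: "l \<in> {1..L}"
  shows "(\<Sum>p\<in>params L m d q. g p * dirW l (m l) (d l) c p) = (\<Sum>k<m l. \<Sum>a<d l. g (Wp l k a) * c k a)"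
proof -
  define S where "S = (\<lambda>(k,a). Wp l k a) ` ({..<m l} \<times> {..<d l})"
  have SP: "S \<subseteq> params L m d q" unfolding S_def using l by (auto intro: Wp_in_params)
  have "(\<Sum>p\<in>params L m d q. g p * dirW l (m l) (d l) c p) = (\<Sum>p\<in>S. g p * dirW l (m l) (d l) c p)"
    by (rule sum.mono_neutral_right[OF finite_params SP]) (auto simp: S_def dirW_def split: param.splits)
  also have "\<dots> = (\<Sum>(k,a)\<in>{..<m l} \<times> {..<d l}. g (Wp l k a) * c k a)"
    unfolding S_def by (subst sum.reindex) (auto simp: inj_on_def dirW_def intro!: sum.cong)
  also have "\<dots> = (\<Sum>k<m l. \<Sum>a<d l. g (Wp l k a) * c k a)"
    by (simp add: sum.cartesian_product)
  finally show ?thesis .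
qed

lemma matvec_pert:
  fixes W :: "nat \<Rightarrow> nat \<Rightarrow> real"
  assumes j: "j < dl" and nx: "nx = (\<Sum>a<dl. (x a)^2)" "nx > 0"
  shows "matvec ml dl (\<lambda>i a. W i a + t * (if i < ml \<and> a < dl then W i j * x a / nx else 0)) x
         = matvec ml dl W (x(j := x j + t))"
proof
  fix i
  show "matvec ml dl (\<lambda>i a. W i a + t * (if i < ml \<and> a < dl then W i j * x a / nx else 0)) x i
         = matvec ml dl W (x(j := x j + t)) i"
  proof (cases "i < ml")
    case True
    have "(\<Sum>a<dl. (W i a + t * (if i < ml \<and> a < dl then W i j * x a / nx else 0)) * x a)
        = (\<Sum>a<dl. W i a * x a + (t * W i j / nx) * (x a)^2)"
      using True by (intro sum.cong) (auto simp: algebra_simps power2_eq_square)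
    also have "\<dots> = (\<Sum>a<dl. W i a * x a) + (t * W i j / nx) * nx"
      by (simp add: sum.distrib sum_distrib_left nx(1))
    also have "\<dots> = (\<Sum>a<dl. W i a * x a) + t * W i j"
      using nx(2) by simp
    also have "\<dots> = (\<Sum>a<dl. W i a * x a + (if a = j then W i j * t else 0))"
      using j by (simp add: sum.distrib mult.commute)
    also have "\<dots> = (\<Sum>a<dl. W i a * (x(j := x j + t)) a)"
      by (intro sum.cong) (auto simp: algebra_simps)
    finally show ?thesis using True by (simp add: matvec_def)
  qed (simp add: matvec_def)
qed

lemma fpert:
  assumes l: "l \<in> {1..L}" and j: "j < d l"
    and xdef: "x = layer_in \<sigma> m d \<theta> l x0"
    and nx: "nx = (\<Sum>a<d l. (x a)^2)" "nx > 0"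
  shows "f_from \<sigma> m d L \<theta> l (x(j := x j + t))
       = net \<sigma> m d L (\<lambda>p. \<theta> p + t * dirW l (m l) (d l) (\<lambda>k a. Wof \<theta> l k j * x a / nx) p) x0"
proof -
  define \<theta>' where "\<theta>' = (\<lambda>p. \<theta> p + t * dirW l (m l) (d l) (\<lambda>k a. Wof \<theta> l k j * x a / nx) p)"
  have Wo: "l' \<noteq> l \<Longrightarrow> Wof \<theta>' l' = Wof \<theta> l'" for l'
    by (auto simp: \<theta>'_def Wof_def dirW_def)
  have bo: "bof \<theta>' l' = bof \<theta> l'" for l'
    by (auto simp: \<theta>'_def bof_def dirW_def)
  have Wl: "Wof \<theta>' l = (\<lambda>i a. Wof \<theta> l i a + t * (if i < m l \<and> a < d l then Wof \<theta> l i j * x a / nx else 0))"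
    unfolding \<theta>'_def Wof_def dirW_def by auto
  obtain k where k: "Suc L - l = Suc k" using l by (metis Suc_diff_le atLeastAtMost_iff)
  have LL: "L = (l - 1) + Suc k" using l k by auto
  have l1: "1 + (l - 1) = l" using l by auto
  have "net \<sigma> m d L \<theta>' x0 = run \<sigma> m d \<theta>' l (Suc k) (run \<sigma> m d \<theta>' 1 (l - 1) x0)"
    unfolding net_def by (subst LL) (simp only: run_add l1)
  also have "run \<sigma> m d \<theta>' 1 (l - 1) x0 = x"
    unfolding xdef layer_in_def by (rule run_cong[symmetric]) (use Wo bo in auto)
  also have "run \<sigma> m d \<theta>' l (Suc k) x
      = run \<sigma> m d \<theta>' (Suc l) k (\<sigma> l (matvec (m l) (d l) (Wof \<theta>' l) x) (bof \<theta>' l))" by simp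
  also have "\<dots> = run \<sigma> m d \<theta> (Suc l) k (\<sigma> l (matvec (m l) (d l) (Wof \<theta> l) (x(j := x j + t))) (bof \<theta> l))"
    unfolding Wl bo matvec_pert[OF j nx] by (rule run_cong[symmetric]) (use Wo bo in auto)
  also have "\<dots> = f_from \<sigma> m d L \<theta> l (x(j := x j + t))"
    unfolding f_from_def k by simp
  finally show ?thesis by (simp add: \<theta>'_def)
qed

lemma jac_repr:
  assumes l: "l \<in> {1..L}" and j: "j < d l" and r: "r < N"
    and xdef: "x = layer_in \<sigma> m d \<theta> l x0"
    and nx: "nx = (\<Sum>a<d l. (x a)^2)" "nx > 0"
    and fd: "has_fderiv (params L m d q) {..<N} (\<lambda>th. net \<sigma> m d L th x0) \<theta> D0"
  shows "jac (f_from \<sigma> m d L \<theta> l) x r j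
       = (\<Sum>k<m l. \<Sum>a<d l. D0 r (Wp l k a) * (Wof \<theta> l k j * x a / nx))"
proof -
  define \<Delta> where "\<Delta> = dirW l (m l) (d l) (\<lambda>k a. Wof \<theta> l k j * x a / nx)"
  have eq: "(\<lambda>t. f_from \<sigma> m d L \<theta> l (x(j := x j + t)) r) = (\<lambda>t. net \<sigma> m d L (\<lambda>p. \<theta> p + t * \<Delta> p) x0 r)"
    unfolding \<Delta>_def using fpert[OF l j xdef nx] by simp
  have "((\<lambda>t. net \<sigma> m d L (\<lambda>p. \<theta> p + t * \<Delta> p) x0 r) has_real_derivative
          (\<Sum>p\<in>params L m d q. D0 r p * \<Delta> p)) (at 0)"
    by (rule line_deriv0[OF fd]) (use r dirW_supp[OF l] in \<open>auto simp: \<Delta>_def\<close>)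
  then have "jac (f_from \<sigma> m d L \<theta> l) x r j = (\<Sum>p\<in>params L m d q. D0 r p * \<Delta> p)"
    unfolding jac_def eq by (rule DERIV_imp_deriv)
  also have "\<dots> = (\<Sum>k<m l. \<Sum>a<d l. D0 r (Wp l k a) * (Wof \<theta> l k j * x a / nx))"
    unfolding \<Delta>_def by (rule sum_dirW[OF l])
  finally show ?thesis .
qed

lemma cs_sum:
  fixes f g :: "'a \<Rightarrow> real"
  shows "(\<Sum>i\<in>I. f i * g i) \<le> sqrt (\<Sum>i\<in>I. (f i)^2) * sqrt (\<Sum>i\<in>I. (g i)^2)"
proof -
  have "(\<Sum>i\<in>I. f i * g i) \<le> sqrt ((\<Sum>i\<in>I. f i * g i)^2)" by simp
  also have "\<dots> \<le> sqrt ((\<Sum>i\<in>I. (f i)^2) * (\<Sum>i\<in>I. (g i)^2))"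
    by (intro real_sqrt_le_mono Cauchy_Schwarz_ineq_sum)
  also have "\<dots> = sqrt (\<Sum>i\<in>I. (f i)^2) * sqrt (\<Sum>i\<in>I. (g i)^2)" by (simp add: real_sqrt_mult)
  finally show ?thesis .
qed

lemma matvec_bound:
  "vnorm {..<k} (matvec k a A v) \<le> fro {..<k} {..<a} A * vnorm {..<a} v"
proof -
  have "(\<Sum>i<k. (matvec k a A v i)^2) \<le> (\<Sum>i<k. (\<Sum>j<a. (A i j)^2) * (\<Sum>j<a. (v j)^2))"
    by (intro sum_mono) (simp add: matvec_def Cauchy_Schwarz_ineq_sum)
  also have "\<dots> = (\<Sum>i<k. \<Sum>j<a. (A i j)^2) * (\<Sum>j<a. (v j)^2)" by (simp add: sum_distrib_right)
  finally have "sqrt (\<Sum>i<k. (matvec k a A v i)^2) \<le> sqrt ((\<Sum>i<k. \<Sum>j<a. (A i j)^2) * (\<Sum>j<a. (v j)^2))"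
    by (rule real_sqrt_le_mono)
  then show ?thesis by (simp add: vnorm_def fro_def real_sqrt_mult)
qed

lemma fro_nonneg: "fro K I A \<ge> 0"
  unfolding fro_def by (intro real_sqrt_ge_zero sum_nonneg) auto

lemma opnorm_bdd:
  "bdd_above ((\<lambda>v. vnorm {..<k} (matvec k a A v)) ` {v. (\<forall>j. a \<le> j \<longrightarrow> v j = 0) \<and> vnorm {..<a} v \<le> 1})"
proof (rule bdd_aboveI2)
  fix v assume "v \<in> {v. (\<forall>j. a \<le> j \<longrightarrow> v j = 0) \<and> vnorm {..<a} v \<le> 1}"
  then have "vnorm {..<a} v \<le> 1" by auto
  then have "fro {..<k} {..<a} A * vnorm {..<a} v \<le> fro {..<k} {..<a} A"
    using fro_nonneg[of "{..<k}" "{..<a}" A] by (simp add: mult_left_le)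
  then show "vnorm {..<k} (matvec k a A v) \<le> fro {..<k} {..<a} A"
    using matvec_bound[of k a A v] by linarith
qed

lemma opnorm_upper:
  assumes "\<forall>j. a \<le> j \<longrightarrow> v j = 0" "vnorm {..<a} v \<le> 1"
  shows "vnorm {..<k} (matvec k a A v) \<le> opnorm k a A"
  unfolding opnorm_def by (rule cSup_upper[OF _ opnorm_bdd]) (use assms in auto)

lemma vnorm_zero: "vnorm I (\<lambda>_. 0) = 0" by (simp add: vnorm_def)

lemma opnorm_nonneg: "opnorm k a A \<ge> 0"
proof -
  have "vnorm {..<k} (matvec k a A (\<lambda>_. 0)) \<le> opnorm k a A"
    by (rule opnorm_upper) (auto simp: vnorm_zero)
  moreover have "matvec k a A (\<lambda>_. 0) = (\<lambda>_. 0)" by (auto simp: matvec_def)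
  ultimately show ?thesis by (simp add: vnorm_zero)
qed

lemma matvec_scale: "matvec k a A (\<lambda>j. c * v j) = (\<lambda>i. c * matvec k a A v i)"
  by (auto simp: matvec_def sum_distrib_left algebra_simps)

lemma opnorm_le:
  assumes supp: "\<forall>j. a \<le> j \<longrightarrow> v j = 0"
  shows "vnorm {..<k} (matvec k a A v) \<le> opnorm k a A * vnorm {..<a} v"
proof (cases "vnorm {..<a} v = 0")
  case True
  then have "(\<Sum>j<a. (v j)^2) = 0" by (simp add: vnorm_def)
  then have "\<forall>j<a. v j = 0" by (subst (asm) sum_nonneg_eq_0_iff) auto
  then have "matvec k a A v = (\<lambda>_. 0)" by (auto simp: matvec_def)
  then show ?thesis using True by (simp add: vnorm_zero)
next
  case False
  define nv where "nv = vnorm {..<a} v"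
  have nv: "nv > 0" using False vnorm_nonneg[of "{..<a}" v] by (simp add: nv_def)
  have "vnorm {..<k} (matvec k a A (\<lambda>j. (1/nv) * v j)) \<le> opnorm k a A"
  proof -
    have u1: "vnorm {..<a} (\<lambda>j. (1/nv) * v j) \<le> 1"
      by (simp only: vnorm_scale) (use nv in \<open>simp add: nv_def\<close>)
    show ?thesis by (rule opnorm_upper[OF _ u1]) (use supp in auto)
  qed
  then have "(1/nv) * vnorm {..<k} (matvec k a A v) \<le> opnorm k a A"
    by (simp only: matvec_scale vnorm_scale) (use nv in simp)
  then show ?thesis using nv by (simp add: nv_def[symmetric] field_simps)
qed

lemma transpose_bound:
  fixes W :: "nat \<Rightarrow> nat \<Rightarrow> real"
  shows "(\<Sum>j<a. (\<Sum>k<mm. y k * W k j)^2) \<le> (opnorm mm a W)^2 * (\<Sum>k<mm. (y k)^2)"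
proof -
  define b where "b j = (if j < a then (\<Sum>k<mm. y k * W k j) else 0)" for j
  define B where "B = (\<Sum>j<a. (b j)^2)"
  define nb where "nb = vnorm {..<a} b"
  define ny where "ny = sqrt (\<Sum>k<mm. (y k)^2)"
  have B0: "B \<ge> 0" unfolding B_def by (intro sum_nonneg) auto
  have nbB: "nb = sqrt B" by (simp add: nb_def B_def vnorm_def)
  have ny0: "ny \<ge> 0" unfolding ny_def by (intro real_sqrt_ge_zero sum_nonneg) auto
  have op0: "opnorm mm a W \<ge> 0" by (rule opnorm_nonneg)
  have "B = (\<Sum>j<a. b j * (\<Sum>k<mm. y k * W k j))"
    unfolding B_def by (intro sum.cong) (auto simp: b_def power2_eq_square)
  also have "\<dots> = (\<Sum>k<mm. y k * (\<Sum>j<a. W k j * b j))"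
    by (simp add: sum_distrib_left sum_distrib_right algebra_simps sum.swap[of _ "{..<a}"])
  also have "\<dots> = (\<Sum>k<mm. y k * matvec mm a W b k)"
    by (intro sum.cong) (auto simp: matvec_def)
  also have "\<dots> \<le> ny * vnorm {..<mm} (matvec mm a W b)"
    unfolding ny_def vnorm_def by (rule cs_sum)
  also have "\<dots> \<le> ny * (opnorm mm a W * nb)"
    unfolding nb_def by (intro mult_left_mono opnorm_le ny0) (auto simp: b_def)
  finally have Ble: "B \<le> ny * opnorm mm a W * nb" by (simp add: mult.assoc)
  have "nb \<le> ny * opnorm mm a W"
  proof (cases "nb = 0")
    case True then show ?thesis using ny0 op0 by simp
  next
    case False
    then have nbp: "nb > 0" using nbB B0 by simp
    have "nb * nb \<le> (ny * opnorm mm a W) * nb" using Ble nbB B0 by simp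
    then show ?thesis using nbp by simp
  qed
  then have "nb^2 \<le> (ny * opnorm mm a W)^2" by (rule power_mono) (simp_all add: nbB B0)
  then have "B \<le> (opnorm mm a W)^2 * ny^2" using nbB B0 by (simp add: power_mult_distrib mult.commute)
  also have "ny^2 = (\<Sum>k<mm. (y k)^2)" unfolding ny_def by (intro real_sqrt_pow2 sum_nonneg) auto
  finally show ?thesis unfolding B_def b_def by simp
qed

lemma J_bound:
  fixes J :: "nat \<Rightarrow> nat \<Rightarrow> real" and Dm :: "nat \<Rightarrow> nat \<Rightarrow> nat \<Rightarrow> real"
  assumes J: "\<And>r j. r < N \<Longrightarrow> j < dd \<Longrightarrow> J r j = (\<Sum>k<mm. \<Sum>a<dd. Dm r k a * (W k j * x a / nx))"
    and nx: "nx = (\<Sum>a<dd. (x a)^2)" "nx > 0"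
  shows "fro {..<N} {..<dd} J \<le> opnorm mm dd W * sqrt (\<Sum>r<N. \<Sum>k<mm. \<Sum>a<dd. (Dm r k a)^2) / sqrt nx"
proof -
  define Q where "Q r k = (\<Sum>a<dd. Dm r k a * x a)" for r k
  define op where "op = opnorm mm dd W"
  have J': "J r j = (\<Sum>k<mm. Q r k * W k j) / nx" if "r < N" "j < dd" for r j
    using that by (simp add: J Q_def sum_divide_distrib sum_distrib_left sum_distrib_right algebra_simps)
  have Qb: "(Q r k)^2 \<le> (\<Sum>a<dd. (Dm r k a)^2) * nx" for r k
    unfolding Q_def nx(1) by (rule Cauchy_Schwarz_ineq_sum)
  have "(\<Sum>r<N. \<Sum>j<dd. (J r j)^2) = (\<Sum>r<N. (\<Sum>j<dd. (\<Sum>k<mm. Q r k * W k j)^2) / nx^2)"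
  proof (rule sum.cong)
    fix r assume "r \<in> {..<N}"
    then have r: "r < N" by simp
    have "(\<Sum>j<dd. (J r j)^2) = (\<Sum>j<dd. (\<Sum>k<mm. Q r k * W k j)^2 / nx^2)"
      by (rule sum.cong) (simp_all add: J' r power_divide)
    then show "(\<Sum>j<dd. (J r j)^2) = (\<Sum>j<dd. (\<Sum>k<mm. Q r k * W k j)^2) / nx^2"
      by (simp add: sum_divide_distrib)
  qed simp
  also have "\<dots> \<le> (\<Sum>r<N. op^2 * (\<Sum>k<mm. (Q r k)^2) / nx^2)"
    unfolding op_def by (intro sum_mono divide_right_mono transpose_bound) auto
  also have "\<dots> \<le> (\<Sum>r<N. op^2 * (\<Sum>k<mm. (\<Sum>a<dd. (Dm r k a)^2) * nx) / nx^2)"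
    by (intro sum_mono divide_right_mono mult_left_mono Qb) auto
  also have "\<dots> = op^2 * (\<Sum>r<N. \<Sum>k<mm. \<Sum>a<dd. (Dm r k a)^2) / nx"
    using nx(2) by (simp add: sum_distrib_left sum_distrib_right sum_divide_distrib power2_eq_square mult.assoc)
  finally have "fro {..<N} {..<dd} J \<le> sqrt (op^2 * (\<Sum>r<N. \<Sum>k<mm. \<Sum>a<dd. (Dm r k a)^2) / nx)"
    unfolding fro_def by (rule real_sqrt_le_mono)
  also have "\<dots> = op * sqrt (\<Sum>r<N. \<Sum>k<mm. \<Sum>a<dd. (Dm r k a)^2) / sqrt nx"
    using opnorm_nonneg[of mm dd W] by (simp add: op_def real_sqrt_mult real_sqrt_divide)
  finally show ?thesis unfolding op_def .
qed

lemma vnorm_sq: "(vnorm I g)^2 = (\<Sum>j\<in>I. (g j)^2)"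
  unfolding vnorm_def by (intro real_sqrt_pow2 sum_nonneg) auto

lemma sharp_term:
  fixes Dx :: "(nat \<Rightarrow> real) \<Rightarrow> (param \<Rightarrow> real) \<Rightarrow> nat \<Rightarrow> param \<Rightarrow> real"
  assumes Dfd: "\<forall>x th. has_fderiv (params L m d q) {..<N} (\<lambda>th. net \<sigma> m d L th x) th (Dx x th)"
    and Hfd: "\<forall>x th. \<exists>H. has_fderiv (params L m d q) ({..<N} \<times> params L m d q) (\<lambda>y (k,i). Dx x y k i) th H"
    and interp: "\<forall>i\<in>{1..n}. \<forall>k<N. net \<sigma> m d L \<theta> (xs i) k = ys i k"
    and p: "p \<in> params L m d q"
  shows "deriv (deriv (\<lambda>t. loss \<sigma> m d L N n xs ys (\<theta>(p := \<theta> p + t)))) 0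
         = (1 / real n) * (\<Sum>i=1..n. \<Sum>k<N. (Dx (xs i) \<theta> k p)^2)"
proof -
  define P where "P = params L m d q"
  define e where "e q' = (if q' = p then 1 else (0::real))" for q'
  have supp: "\<forall>j. j \<notin> P \<longrightarrow> e j = 0" using p by (auto simp: e_def P_def)
  have finP: "finite P" unfolding P_def by (rule finite_params)
  have upd: "\<theta>(p := \<theta> p + t) = (\<lambda>q'. \<theta> q' + t * e q')" for t
    by (auto simp: e_def)
  define \<phi> where "\<phi> i k t = net \<sigma> m d L (\<lambda>q'. \<theta> q' + t * e q') (xs i) k" for i k t
  define \<psi> where "\<psi> i k t = Dx (xs i) (\<lambda>q'. \<theta> q' + t * e q') k p" for i k t
  have sum_e: "(\<Sum>j\<in>P. f j * e j) = f p" for f :: "param \<Rightarrow> real"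
  proof -
    have "(\<Sum>j\<in>P. f j * e j) = (\<Sum>j\<in>P. if j = p then f j else 0)"
      by (rule sum.cong) (auto simp: e_def)
    also have "\<dots> = f p" using p finP by (simp add: P_def)
    finally show ?thesis .
  qed
  have d\<phi>: "((\<phi> i k) has_real_derivative \<psi> i k t) (at t)" if "k < N" for i k t
  proof -
    have "((\<lambda>s. net \<sigma> m d L (\<lambda>q'. \<theta> q' + s * e q') (xs i) k) has_real_derivative
           (\<Sum>j\<in>P. Dx (xs i) (\<lambda>q'. \<theta> q' + t * e q') k j * e j)) (at t)"
      by (rule line_deriv[where I=P]) (use Dfd that supp in \<open>auto simp: P_def\<close>)
    then show ?thesis unfolding sum_e \<phi>_def[abs_def] \<psi>_def by simp
  qed
  have d\<psi>: "\<exists>h. ((\<psi> i k) has_real_derivative h) (at 0)" if "k < N" for i k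
  proof -
    obtain H where H: "has_fderiv P ({..<N} \<times> P) (\<lambda>y (kk,pp). Dx (xs i) y kk pp) \<theta> H"
      using Hfd unfolding P_def by blast
    have "((\<lambda>s. (\<lambda>y (kk,pp). Dx (xs i) y kk pp) (\<lambda>q'. \<theta> q' + s * e q') (k, p)) has_real_derivative
           (\<Sum>j\<in>P. H (k,p) j * e j)) (at 0)"
      by (rule line_deriv0[OF H]) (use finP that p supp in \<open>auto simp: P_def\<close>)
    then show ?thesis unfolding \<psi>_def[abs_def] by auto
  qed
  have "\<forall>ik. \<exists>hv. snd ik < N \<longrightarrow> ((\<psi> (fst ik) (snd ik)) has_real_derivative hv) (at 0)"
    using d\<psi> by auto
  then obtain hh where hh: "\<forall>ik. snd ik < N \<longrightarrow> ((\<psi> (fst ik) (snd ik)) has_real_derivative hh ik) (at 0)"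
    by (metis choice)
  define h where "h i k = hh (i, k)" for i k
  have h: "\<And>i k. k < N \<Longrightarrow> ((\<psi> i k) has_real_derivative h i k) (at 0)"
    using hh unfolding h_def by (metis fst_conv snd_conv)
  define lossf where "lossf t = (1 / real n) * (\<Sum>i=1..n. (1/2) * (\<Sum>k<N. (\<phi> i k t - ys i k)^2))" for t
  define lossd where "lossd t = (1 / real n) * (\<Sum>i=1..n. (1/2) * (\<Sum>k<N. 2 * (\<phi> i k t - ys i k) * \<psi> i k t))" for t
  have lossl: "(\<lambda>t. loss \<sigma> m d L N n xs ys (\<theta>(p := \<theta> p + t))) = lossf"
    by (rule ext) (simp add: loss_def upd vnorm_sq lossf_def \<phi>_def)
  have dl: "(lossf has_real_derivative lossd t) (at t)" for t
    unfolding lossf_def[abs_def] lossd_def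
    by (intro DERIV_cmult DERIV_sum) (auto intro!: derivative_eq_intros d\<phi>)
  have dd: "deriv lossf = lossd" by (rule ext) (rule DERIV_imp_deriv[OF dl])
  define V where "V = (1 / real n) * (\<Sum>i=1..n. (1/2) * (\<Sum>k<N. 2 * (\<psi> i k 0 * \<psi> i k 0 + (\<phi> i k 0 - ys i k) * h i k)))"
  have dl': "(lossd has_real_derivative V) (at 0)"
    unfolding lossd_def[abs_def] V_def
    by (intro DERIV_cmult DERIV_sum) (auto intro!: derivative_eq_intros d\<phi> h)
  have "deriv lossd 0 = V" by (rule DERIV_imp_deriv[OF dl'])
  also have "V = (1 / real n) * (\<Sum>i=1..n. \<Sum>k<N. (Dx (xs i) \<theta> k p)^2)"
    unfolding V_def
    by (intro arg_cong[where f="\<lambda>x. (1 / real n) * x"] sum.cong refl)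
       (use interp in \<open>auto simp: \<phi>_def \<psi>_def power2_eq_square sum_distrib_left[symmetric]\<close>)
  finally show ?thesis unfolding lossl dd .
qed

lemma pow_sum_le:
  fixes y :: "'a \<Rightarrow> real"
  assumes "finite S" "\<And>x. x \<in> S \<Longrightarrow> y x \<ge> 0" "N \<ge> 1"
  shows "(\<Sum>x\<in>S. (y x)^N) \<le> (\<Sum>x\<in>S. y x)^N"
proof -
  have "(\<Sum>x\<in>S. (y x)^N) \<le> (\<Sum>x\<in>S. y x * (\<Sum>x\<in>S. y x)^(N-1))"
  proof (rule sum_mono)
    fix x assume x: "x \<in> S"
    have "y x \<le> (\<Sum>x\<in>S. y x)" by (rule member_le_sum) (use assms x in auto)
    then have "(y x)^(N-1) \<le> (\<Sum>x\<in>S. y x)^(N-1)" using assms(2)[OF x] by (intro power_mono) auto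
    then have "y x * (y x)^(N-1) \<le> y x * (\<Sum>x\<in>S. y x)^(N-1)" using assms(2)[OF x] by (intro mult_left_mono) auto
    moreover have "y x * (y x)^(N-1) = (y x)^N" using assms(3) by (metis Suc_diff_le diff_Suc_1 power_Suc)
    ultimately show "(y x)^N \<le> y x * (\<Sum>x\<in>S. y x)^(N-1)" by simp
  qed
  also have "\<dots> = (\<Sum>x\<in>S. y x) * (\<Sum>x\<in>S. y x)^(N-1)" by (simp add: sum_distrib_right)
  also have "\<dots> = (\<Sum>x\<in>S. y x)^N" using assms(3) by (metis Suc_diff_le diff_Suc_1 power_Suc)
  finally show ?thesis .
qed

lemma sum_params_ge:
  fixes G :: "param \<Rightarrow> real"
  assumes "\<And>p. G p \<ge> 0"
  shows "(\<Sum>l=1..L. \<Sum>k<m l. \<Sum>a<d l. G (Wp l k a)) \<le> (\<Sum>p\<in>params L m d q. G p)"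
proof -
  define T where "T = (\<lambda>(l,k,a). Wp l k a) ` (SIGMA l:{1..L}. {..<m l} \<times> {..<d l})"
  have TP: "T \<subseteq> params L m d q" unfolding T_def params_def params_Sigma by auto
  have inj: "inj_on (\<lambda>(l,k,a). Wp l k a) (SIGMA l:{1..L}. {..<m l} \<times> {..<d l})"
    by (auto simp: inj_on_def)
  have "(\<Sum>l=1..L. \<Sum>k<m l. \<Sum>a<d l. G (Wp l k a)) = (\<Sum>l=1..L. \<Sum>(k,a)\<in>{..<m l} \<times> {..<d l}. G (Wp l k a))"
    by (simp add: sum.cartesian_product)
  also have "\<dots> = (\<Sum>(l,ka)\<in>(SIGMA l:{1..L}. {..<m l} \<times> {..<d l}). (\<lambda>(k,a). G (Wp l k a)) ka)"
    by (subst sum.Sigma) auto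
  also have "\<dots> = (\<Sum>p\<in>T. G p)"
    unfolding T_def by (subst sum.reindex[OF inj]) (auto intro!: sum.cong)
  also have "\<dots> \<le> (\<Sum>p\<in>params L m d q. G p)"
    by (rule sum_mono2[OF finite_params TP]) (use assms in auto)
  finally show ?thesis .
qed

lemma swap4:
  "(\<Sum>i\<in>A. \<Sum>r\<in>B. \<Sum>k\<in>C. \<Sum>a\<in>D. f i r k a) = (\<Sum>k\<in>C. \<Sum>a\<in>D. \<Sum>i\<in>A. \<Sum>r\<in>B. f i r k a)"
proof -
  have "(\<Sum>i\<in>A. \<Sum>r\<in>B. \<Sum>k\<in>C. \<Sum>a\<in>D. f i r k a) = (\<Sum>i\<in>A. \<Sum>k\<in>C. \<Sum>r\<in>B. \<Sum>a\<in>D. f i r k a)"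
    by (rule sum.cong[OF refl], rule sum.swap)
  also have "\<dots> = (\<Sum>i\<in>A. \<Sum>k\<in>C. \<Sum>a\<in>D. \<Sum>r\<in>B. f i r k a)"
    by (rule sum.cong[OF refl], rule sum.cong[OF refl], rule sum.swap)
  also have "\<dots> = (\<Sum>k\<in>C. \<Sum>i\<in>A. \<Sum>a\<in>D. \<Sum>r\<in>B. f i r k a)"
    by (rule sum.swap)
  also have "\<dots> = (\<Sum>k\<in>C. \<Sum>a\<in>D. \<Sum>i\<in>A. \<Sum>r\<in>B. f i r k a)"
    by (rule sum.cong[OF refl], rule sum.swap)
  finally show ?thesis .
qed

lemma cs_double:
  fixes f g :: "nat \<Rightarrow> nat \<Rightarrow> real"
  shows "(\<Sum>l\<in>A. \<Sum>i\<in>B. f l i * g l i) \<le> sqrt (\<Sum>l\<in>A. \<Sum>i\<in>B. (f l i)^2) * sqrt (\<Sum>l\<in>A. \<Sum>i\<in>B. (g l i)^2)"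
  using cs_sum[of "\<lambda>(l,i). f l i" "\<lambda>(l,i). g l i" "A \<times> B"]
  by (simp add: sum.cartesian_product case_prod_beta)

theorem proposition2:
  fixes L N n :: nat
    and d m q :: "nat \<Rightarrow> nat"
    and \<sigma> :: "nat \<Rightarrow> (nat \<Rightarrow> real) \<Rightarrow> (nat \<Rightarrow> real) \<Rightarrow> (nat \<Rightarrow> real)"
    and xs ys :: "nat \<Rightarrow> nat \<Rightarrow> real"
    and \<theta> :: "param \<Rightarrow> real"
  assumes L_pos: "1 \<le> L"
    and N_pos: "1 \<le> N"
    and out_dim: "d (Suc L) = N"
    and sigma_diff: "\<forall>l\<in>{1..L}. \<forall>b u. (\<forall>j. m l \<le> j \<longrightarrow> u j = 0) \<longrightarrow>
                       (\<exists>A. has_fderiv {..<m l} {..<d (Suc l)} (\<lambda>v. \<sigma> l v b) u A)"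
    and f_twice: "\<forall>x. twice_fdiff (params L m d q) {..<N} (\<lambda>th. net \<sigma> m d L th x)"
    and nonzero: "\<forall>l\<in>{1..L}. \<forall>i\<in>{1..n}. \<exists>j<d l. layer_in \<sigma> m d \<theta> l (xs i) j \<noteq> 0"
    and interp: "\<forall>i\<in>{1..n}. \<forall>k<N. net \<sigma> m d L \<theta> (xs i) k = ys i k"
  shows "(\<Sum>l=1..L. dV \<sigma> m d L N n xs \<theta> l)
           \<le> (real N powr (- real N / 2) / real n) *
              (\<Sum>l=1..L. \<Sum>i=1..n.
                 (fro {..<N} {..<d l} (jac (f_from \<sigma> m d L \<theta> l) (layer_in \<sigma> m d \<theta> l (xs i)))) ^ N)
       \<and> (real N powr (- real N / 2) / real n) *
              (\<Sum>l=1..L. \<Sum>i=1..n.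
                 (fro {..<N} {..<d l} (jac (f_from \<sigma> m d L \<theta> l) (layer_in \<sigma> m d \<theta> l (xs i)))) ^ N)
           \<le> (1 / real n) *
              sqrt (\<Sum>l=1..L. \<Sum>i=1..n.
                 opnorm (m l) (d l) (Wof \<theta> l) ^ (2 * N) /
                 vnorm {..<d l} (layer_in \<sigma> m d \<theta> l (xs i)) ^ (2 * N)) *
              (real n * sharpness \<sigma> m d q L N n xs ys \<theta> / real N) powr (real N / 2)"
proof -
  define P where "P = params L m d q"
  have "\<forall>x. \<exists>D. (\<forall>th. has_fderiv P {..<N} (\<lambda>th. net \<sigma> m d L th x) th (D th)) \<and>
          (\<forall>th. \<exists>H. has_fderiv P ({..<N} \<times> P) (\<lambda>y (k, i). D y k i) th H)"
    using f_twice unfolding twice_fdiff_def P_def by blast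
  then obtain Dx where Dx: "\<forall>x. (\<forall>th. has_fderiv P {..<N} (\<lambda>th. net \<sigma> m d L th x) th (Dx x th)) \<and>
          (\<forall>th. \<exists>H. has_fderiv P ({..<N} \<times> P) (\<lambda>y (k, i). Dx x y k i) th H)"
    by (rule choice[THEN exE])
  have Dfd: "\<forall>x th. has_fderiv (params L m d q) {..<N} (\<lambda>th. net \<sigma> m d L th x) th (Dx x th)"
    using Dx unfolding P_def by blast
  have Hfd: "\<forall>x th. \<exists>H. has_fderiv (params L m d q) ({..<N} \<times> params L m d q) (\<lambda>y (k, i). Dx x y k i) th H"
    using Dx unfolding P_def by blast
  have sharp: "sharpness \<sigma> m d q L N n xs ys \<theta>
      = (\<Sum>p\<in>params L m d q. (1 / real n) * (\<Sum>i=1..n. \<Sum>k<N. (Dx (xs i) \<theta> k p)^2))"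
    unfolding sharpness_def by (rule sum.cong[OF refl]) (rule sharp_term[OF Dfd Hfd interp])
  define xl where "xl l i = layer_in \<sigma> m d \<theta> l (xs i)" for l i
  define nx where "nx l i = (\<Sum>a<d l. (xl l i a)^2)" for l i
  define Jm where "Jm l i = jac (f_from \<sigma> m d L \<theta> l) (xl l i)" for l i
  define fr where "fr l i = fro {..<N} {..<d l} (Jm l i)" for l i
  define c where "c l i = opnorm (m l) (d l) (Wof \<theta> l) / vnorm {..<d l} (xl l i)" for l i
  define qq where "qq l i = sqrt (\<Sum>r<N. \<Sum>k<m l. \<Sum>a<d l. (Dx (xs i) \<theta> r (Wp l k a))^2)" for l i
  have nxpos: "nx l i > 0" if "l \<in> {1..L}" "i \<in> {1..n}" for l i
  proof -
    have "\<exists>j<d l. xl l i j \<noteq> 0" using nonzero that unfolding xl_def by simp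
    then obtain j where j: "j < d l" "xl l i j \<noteq> 0" by blast
    show ?thesis unfolding nx_def by (rule sum_pos2[where i=j]) (use j in auto)
  qed
  have vn: "vnorm {..<d l} (xl l i) = sqrt (nx l i)" for l i by (simp add: vnorm_def nx_def)
  have fr0: "fr l i \<ge> 0" for l i unfolding fr_def by (rule fro_nonneg)
  have c0: "c l i \<ge> 0" for l i unfolding c_def
    by (intro divide_nonneg_nonneg opnorm_nonneg vnorm_nonneg)
  have qq0: "qq l i \<ge> 0" for l i unfolding qq_def by (intro real_sqrt_ge_zero sum_nonneg) auto
  have frb: "fr l i \<le> c l i * qq l i" if l: "l \<in> {1..L}" and i: "i \<in> {1..n}" for l i
  proof -
    have "fr l i \<le> opnorm (m l) (d l) (Wof \<theta> l) * qq l i / sqrt (nx l i)"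
      unfolding fr_def qq_def
    proof (rule J_bound[where nx="nx l i" and x="xl l i"])
      fix r j assume r: "r < N" and j: "j < d l"
      show "Jm l i r j = (\<Sum>k<m l. \<Sum>a<d l. Dx (xs i) \<theta> r (Wp l k a) * (Wof \<theta> l k j * xl l i a / nx l i))"
        unfolding Jm_def
        by (rule jac_repr[OF l j r xl_def nx_def nxpos[OF l i]]) (use Dfd in blast)
    qed (use nxpos[OF l i] nx_def in auto)
    also have "\<dots> = c l i * qq l i" by (simp add: c_def vn)
    finally show ?thesis .
  qed
  have first: "(\<Sum>l=1..L. dV \<sigma> m d L N n xs \<theta> l)
      \<le> (real N powr (- real N / 2) / real n) * (\<Sum>l=1..L. \<Sum>i=1..n. fr l i ^ N)"
  proof -
    have "(\<Sum>l=1..L. dV \<sigma> m d L N n xs \<theta> l)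
        \<le> (\<Sum>l=1..L. (1 / real n) * (\<Sum>i=1..n. real N powr (- real N / 2) * fr l i ^ N))"
      unfolding dV_def fr_def Jm_def xl_def
      by (intro sum_mono mult_left_mono vol_bound N_pos) auto
    also have "\<dots> = (real N powr (- real N / 2) / real n) * (\<Sum>l=1..L. \<Sum>i=1..n. fr l i ^ N)"
      unfolding sum_distrib_left by (intro sum.cong refl) simp
    finally show ?thesis .
  qed
  define C where "C = (\<Sum>l=1..L. \<Sum>i=1..n. opnorm (m l) (d l) (Wof \<theta> l) ^ (2 * N) /
                 vnorm {..<d l} (xl l i) ^ (2 * N))"
  define S where "S = sharpness \<sigma> m d q L N n xs ys \<theta>"
  have second: "(real N powr (- real N / 2) / real n) * (\<Sum>l=1..L. \<Sum>i=1..n. fr l i ^ N)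
      \<le> (1 / real n) * sqrt C * (real n * S / real N) powr (real N / 2)"
  proof (cases "n = 0")
    case True then show ?thesis by simp
  next
    case False
    then have npos: "real n > 0" by simp
    define Q2 where "Q2 = (\<Sum>l=1..L. \<Sum>i=1..n. (qq l i)^2)"
    have C0: "C \<ge> 0" unfolding C_def
      by (intro sum_nonneg divide_nonneg_nonneg) (simp_all add: power_mult)
    have Q0: "Q2 \<ge> 0" unfolding Q2_def by (intro sum_nonneg) auto
    define G where "G p = (\<Sum>i=1..n. \<Sum>r<N. (Dx (xs i) \<theta> r p)^2)" for p
    have Q2le: "Q2 \<le> real n * S"
    proof -
      have "Q2 = (\<Sum>l=1..L. \<Sum>i=1..n. \<Sum>r<N. \<Sum>k<m l. \<Sum>a<d l. (Dx (xs i) \<theta> r (Wp l k a))^2)"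
        unfolding Q2_def qq_def by (intro sum.cong refl real_sqrt_pow2 sum_nonneg) auto
      also have "\<dots> = (\<Sum>l=1..L. \<Sum>k<m l. \<Sum>a<d l. G (Wp l k a))"
        unfolding G_def by (rule sum.cong[OF refl]) (rule swap4)
      also have "\<dots> \<le> (\<Sum>p\<in>params L m d q. G p)"
        by (rule sum_params_ge) (auto simp: G_def intro!: sum_nonneg)
      also have "\<dots> = real n * S"
        using npos by (simp add: S_def sharp G_def sum_distrib_left)
      finally show ?thesis .
    qed
    have nS0: "real n * S \<ge> 0" using Q0 Q2le by linarith
    have "(\<Sum>l=1..L. \<Sum>i=1..n. fr l i ^ N) \<le> (\<Sum>l=1..L. \<Sum>i=1..n. c l i ^ N * qq l i ^ N)"
      by (intro sum_mono) (auto simp: power_mult_distrib[symmetric] intro!: power_mono frb fr0)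
    also have "\<dots> \<le> sqrt (\<Sum>l=1..L. \<Sum>i=1..n. (c l i ^ N)^2) * sqrt (\<Sum>l=1..L. \<Sum>i=1..n. (qq l i ^ N)^2)"
      by (rule cs_double)
    finally have s1: "(\<Sum>l=1..L. \<Sum>i=1..n. fr l i ^ N) \<le> sqrt (\<Sum>l=1..L. \<Sum>i=1..n. (c l i ^ N)^2) * sqrt (\<Sum>l=1..L. \<Sum>i=1..n. (qq l i ^ N)^2)" .
    have pw: "((x::real)^N)^2 = x^(2*N)" for x by (metis power_mult mult.commute)
    have cC: "(\<Sum>l=1..L. \<Sum>i=1..n. (c l i ^ N)^2) = C"
      unfolding C_def pw c_def by (simp only: power_divide)
    have s2a: "sqrt (\<Sum>l=1..L. \<Sum>i=1..n. (qq l i ^ N)^2) \<le> sqrt ((real n * S) ^ N)"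
    proof (rule real_sqrt_le_mono)
      have "(\<Sum>l=1..L. \<Sum>i=1..n. (qq l i ^ N)^2) = (\<Sum>(l,i)\<in>{1..L} \<times> {1..n}. ((qq l i)^2)^N)"
        unfolding pw by (simp only: power_mult sum.cartesian_product)
      also have "\<dots> \<le> (\<Sum>(l,i)\<in>{1..L} \<times> {1..n}. (qq l i)^2)^N"
        using pow_sum_le[of "{1..L} \<times> {1..n}" "\<lambda>(l,i). (qq l i)^2" N] N_pos
        by (simp add: case_prod_beta)
      also have "\<dots> = Q2^N" unfolding Q2_def by (simp add: sum.cartesian_product)
      also have "\<dots> \<le> (real n * S)^N" by (intro power_mono Q2le Q0)
      finally show "(\<Sum>l=1..L. \<Sum>i=1..n. (qq l i ^ N)^2) \<le> (real n * S)^N" .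
    qed
    have s2b: "sqrt ((real n * S) ^ N) = (real n * S) powr (real N / 2)"
    proof (cases "real n * S = 0")
      case True show ?thesis unfolding True using N_pos by simp
    next
      case False
      then have pos: "real n * S > 0" using nS0 by linarith
      have "(real n * S) powr (real N / 2) = sqrt ((real n * S) powr real N)"
        by (rule powr_half_sqrt_powr) (use pos in simp)
      also have "(real n * S) powr real N = (real n * S) ^ N" using pos by (intro powr_realpow)
      finally show ?thesis by simp
    qed
    have "sqrt C * sqrt (\<Sum>l=1..L. \<Sum>i=1..n. (qq l i ^ N)^2) \<le> sqrt C * (real n * S) powr (real N / 2)"
      using s2a s2b C0 by (intro mult_left_mono) auto
    then have main: "(\<Sum>l=1..L. \<Sum>i=1..n. fr l i ^ N) \<le> sqrt C * (real n * S) powr (real N / 2)"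
      using s1 unfolding cC by linarith
    have A0: "real N powr (- real N / 2) / real n \<ge> 0" by simp
    have "(real N powr (- real N / 2) / real n) * (\<Sum>l=1..L. \<Sum>i=1..n. fr l i ^ N)
          \<le> (real N powr (- real N / 2) / real n) * (sqrt C * (real n * S) powr (real N / 2))"
      by (rule mult_left_mono[OF main A0])
    also have "\<dots> = (1 / real n) * sqrt C * (real n * S / real N) powr (real N / 2)"
    proof -
      have "real N powr (- real N / 2) = real N powr (- (real N / 2))" by simp
      also have "\<dots> = inverse (real N powr (real N / 2))" by (rule powr_minus)
      finally have A: "real N powr (- real N / 2) = inverse (real N powr (real N / 2))" .
      have B: "(real n * S / real N) powr (real N / 2) = (real n * S) powr (real N / 2) / real N powr (real N / 2)"
        using nS0 by (simp add: powr_divide)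
      show ?thesis unfolding A B by (simp only: divide_inverse mult_ac)
    qed
    finally show ?thesis .
  qed
  from first second show ?thesis unfolding fr_def Jm_def xl_def C_def S_def by (rule conjI)
qed

end
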